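(* Let $M$ be a free $\mathbb{T}$-module with a finite $\mathbb{T}$-basis, $V$ its associated complex vector space, and $(\cdot,\cdot)$ a bicomplex scalar product on $M$ which is hyperbolic positive and closed on $V$. Then $V$ is a closed subset of the metric space $(M,d)$, where $d(\widehat X,\widehat Y)=\|\widehat X-\widehat Y\|$.
   Context: Bicomplex numbers: $\mathbb{T}=\{z_1+z_2\mathbf{i_2}: z_1,z_2\in\mathbb{C}(\mathbf{i_1})\}$, $\mathbb{C}(\mathbf{i_1})=\{x+y\mathbf{i_1}: x,y\in\mathbb{R}\}$, $\mathbf{i_1}^2=\mathbf{i_2}^2=-1$, $\mathbf{i_1}\mathbf{i_2}=\mathbf{i_2}\mathbf{i_1}=\mathbf{j}$, $\mathbf{j}^2=1$ (commutative). Hyperbolic numbers $\mathbb{D}=\{x+y\mathbf{j}:x,y\in\mathbb{R}\}$. Idempotents $\mathbf{e_1}=(1+\mathbf{j})/2$, $\mathbf{e_2}=(1-\mathbf{j})/2$. Conjugation: $(z_1+z_2\mathbf{i_2})^{\dagger_3}=\overline{z_1}-\overline{z_2}\mathbf{i_2}$. $\mathbb{D}^+=\{a\mathbf{e_1}+b\mathbf{e_2}: a,b\ge 0\}$. $M$ has $\mathbb{T}$-basis $\{\widehat m_1,\dots,\widehat m_n\}$, $V=\{\sum x_l\widehat m_l: x_l\in\mathbb{C}(\mathbf{i_1})\}$; for $\widehat X=\sum x_l\widehat m_l$ with $x_l=x_{1l}\mathbf{e_1}+x_{2l}\mathbf{e_2}$, $x_{kl}\in\mathbb{C}(\mathbf{i_1})$,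 put $\widehat X_{\mathbf{e_k}}=\sum_l x_{kl}\widehat m_l\in V$. A bicomplex scalar product is a map $(\cdot,\cdot):M\times M\to\mathbb{T}$ with: $(\widehat X,\widehat Y_1+\widehat Y_2)=(\widehat X,\widehat Y_1)+(\widehat X,\widehat Y_2)$; $(\widehat X,\alpha\widehat Y)=\alpha(\widehat X,\widehat Y)$ for $\alpha\in\mathbb{T}$; $(\widehat X,\widehat Y)=(\widehat Y,\widehat X)^{\dagger_3}$; $(\widehat X,\widehat X)=0\iff\widehat X=0$. Hyperbolic positive: $(\widehat X,\widehat X)\in\mathbb{D}^+$ for all $\widehat X$. Closed on $V$: $(\widehat X,\widehat Y)\in\mathbb{C}(\mathbf{i_1})$ for $\widehat X,\widehat Y\in V$. For $\widehat Z\in V$, $\|\widehat Z\|=(\widehat Z,\widehat Z)^{1/2}$; for $\widehat X\in M$, $\|\widehat X\|:=\big((\|\widehat X_{\mathbf{e_1}}\|^2+\|\widehat X_{\mathbf{e_2}}\|^2)/2\big)^{1/2}$; $d$ is a metric on $M$. *)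

theory Defs
  imports "HOL-Analysis.Analysis"
begin

text \<open>A bicomplex number z1 + z2 i2 with z1, z2 in C(i1) is represented by the pair
  of its two C(i1)-components; C(i1) is Isabelle's type complex (i1 = ii).\<close>

datatype bicomplex = BC (bc1: complex) (bc2: complex)

definition bc_zero :: bicomplex where "bc_zero = BC 0 0"

definition bc_add :: "bicomplex \<Rightarrow> bicomplex \<Rightarrow> bicomplex" where
  "bc_add x y = BC (bc1 x + bc1 y) (bc2 x + bc2 y)"

definition bc_mult :: "bicomplex \<Rightarrow> bicomplex \<Rightarrow> bicomplex" where
  "bc_mult x y = BC (bc1 x * bc1 y - bc2 x * bc2 y) (bc1 x * bc2 y + bc2 x * bc1 y)"

definition bc_of_complex :: "complex \<Rightarrow> bicomplex" where
  "bc_of_complex z = BC z 0"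

definition in_Ci1 :: "bicomplex \<Rightarrow> bool" where
  "in_Ci1 x \<longleftrightarrow> bc2 x = 0"

definition bc_i1 :: bicomplex where "bc_i1 = BC \<i> 0"
definition bc_i2 :: bicomplex where "bc_i2 = BC 0 1"
definition bc_j :: bicomplex where "bc_j = bc_mult bc_i1 bc_i2"

definition bc_e1 :: bicomplex where "bc_e1 = bc_mult (bc_of_complex (1/2)) (bc_add (BC 1 0) bc_j)"
definition bc_e2 :: bicomplex where
  "bc_e2 = bc_mult (bc_of_complex (1/2)) (bc_add (BC 1 0) (bc_mult (BC (-1) 0) bc_j))"

definition bc_conj3 :: "bicomplex \<Rightarrow> bicomplex" where
  "bc_conj3 x = BC (cnj (bc1 x)) (- cnj (bc2 x))"

text \<open>Idempotent components: x = (idem1 x) e1 + (idem2 x) e2 with idem_k x in C(i1)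
  (the representation is unique; see lemma below).\<close>
definition bc_idem1 :: "bicomplex \<Rightarrow> complex" where
  "bc_idem1 x = bc1 x - \<i> * bc2 x"
definition bc_idem2 :: "bicomplex \<Rightarrow> complex" where
  "bc_idem2 x = bc1 x + \<i> * bc2 x"

lemma bc_idem_decomp:
  "x = bc_add (bc_mult (bc_of_complex (bc_idem1 x)) bc_e1) (bc_mult (bc_of_complex (bc_idem2 x)) bc_e2)"
  by (cases x) (simp add: bc_add_def bc_mult_def bc_of_complex_def bc_e1_def bc_e2_def bc_j_def
      bc_i1_def bc_i2_def bc_idem1_def bc_idem2_def field_simps complex_eq_iff)

definition bc_Dplus :: "bicomplex set" where
  "bc_Dplus = {bc_add (bc_mult (bc_of_complex (complex_of_real a)) bc_e1)
                      (bc_mult (bc_of_complex (complex_of_real b)) bc_e2) | a b. a \<ge> 0 \<and> b \<ge> 0}"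

text \<open>M is identified with T^n via coordinates w.r.t. its T-basis m_1..m_n: an element
  is the function 'n \<Rightarrow> bicomplex of its coordinates ('n a finite index type).\<close>

type_synonym 'n bcmod = "'n \<Rightarrow> bicomplex"

definition M_zero :: "'n bcmod" where "M_zero = (\<lambda>l. bc_zero)"
definition M_add :: "'n bcmod \<Rightarrow> 'n bcmod \<Rightarrow> 'n bcmod" where
  "M_add X Y = (\<lambda>l. bc_add (X l) (Y l))"
definition M_smult :: "bicomplex \<Rightarrow> 'n bcmod \<Rightarrow> 'n bcmod" where
  "M_smult a X = (\<lambda>l. bc_mult a (X l))"
definition M_sub :: "'n bcmod \<Rightarrow> 'n bcmod \<Rightarrow> 'n bcmod" where
  "M_sub X Y = M_add X (M_smult (BC (-1) 0) Y)"

definition V_space :: "'n bcmod set" where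
  "V_space = {X. \<forall>l. in_Ci1 (X l)}"

definition M_e1 :: "'n bcmod \<Rightarrow> 'n bcmod" where
  "M_e1 X = (\<lambda>l. bc_of_complex (bc_idem1 (X l)))"
definition M_e2 :: "'n bcmod \<Rightarrow> 'n bcmod" where
  "M_e2 X = (\<lambda>l. bc_of_complex (bc_idem2 (X l)))"

definition bicomplex_scalar_product :: "('n bcmod \<Rightarrow> 'n bcmod \<Rightarrow> bicomplex) \<Rightarrow> bool" where
  "bicomplex_scalar_product sp \<longleftrightarrow>
     (\<forall>X Y1 Y2. sp X (M_add Y1 Y2) = bc_add (sp X Y1) (sp X Y2)) \<and>
     (\<forall>X a Y. sp X (M_smult a Y) = bc_mult a (sp X Y)) \<and>
     (\<forall>X Y. sp X Y = bc_conj3 (sp Y X)) \<and>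
     (\<forall>X. sp X X = bc_zero \<longleftrightarrow> X = M_zero)"

definition hyperbolic_positive :: "('n bcmod \<Rightarrow> 'n bcmod \<Rightarrow> bicomplex) \<Rightarrow> bool" where
  "hyperbolic_positive sp \<longleftrightarrow> (\<forall>X. sp X X \<in> bc_Dplus)"

definition closed_on_V :: "('n bcmod \<Rightarrow> 'n bcmod \<Rightarrow> bicomplex) \<Rightarrow> bool" where
  "closed_on_V sp \<longleftrightarrow> (\<forall>X\<in>V_space. \<forall>Y\<in>V_space. in_Ci1 (sp X Y))"

text \<open>For Z in V, (Z,Z) is a nonnegative real number (it lies in C(i1) \<inter> D+), so its
  square root is the real square root of its real part.\<close>
definition V_norm :: "('n bcmod \<Rightarrow> 'n bcmod \<Rightarrow> bicomplex) \<Rightarrow> 'n bcmod \<Rightarrow> real" where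
  "V_norm sp Z = sqrt (Re (bc1 (sp Z Z)))"

definition M_norm :: "('n bcmod \<Rightarrow> 'n bcmod \<Rightarrow> bicomplex) \<Rightarrow> 'n bcmod \<Rightarrow> real" where
  "M_norm sp X = sqrt (((V_norm sp (M_e1 X))\<^sup>2 + (V_norm sp (M_e2 X))\<^sup>2) / 2)"

definition M_dist :: "('n bcmod \<Rightarrow> 'n bcmod \<Rightarrow> bicomplex) \<Rightarrow> 'n bcmod \<Rightarrow> 'n bcmod \<Rightarrow> real" where
  "M_dist sp X Y = M_norm sp (M_sub X Y)"

end

theory Submission
  imports Defs
begin

definition Bf :: "('n bcmod \<Rightarrow> 'n bcmod \<Rightarrow> bicomplex) \<Rightarrow> 'n bcmod \<Rightarrow> 'n bcmod \<Rightarrow> real" where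
  "Bf sp X Y = Re (bc1 (sp X Y))"

lemma bsp_D:
  assumes "bicomplex_scalar_product sp"
  shows "sp X (M_add Y1 Y2) = bc_add (sp X Y1) (sp X Y2)"
    and "sp X (M_smult a Y) = bc_mult a (sp X Y)"
    and "sp X Y = bc_conj3 (sp Y X)"
    and "sp X X = bc_zero \<longleftrightarrow> X = M_zero"
proof -
  note h = assms[unfolded bicomplex_scalar_product_def]
  show "sp X (M_add Y1 Y2) = bc_add (sp X Y1) (sp X Y2)" by (rule h[THEN conjunct1, rule_format])
  show "sp X (M_smult a Y) = bc_mult a (sp X Y)" by (rule h[THEN conjunct2, THEN conjunct1, rule_format])
  show "sp X Y = bc_conj3 (sp Y X)" by (rule h[THEN conjunct2, THEN conjunct2, THEN conjunct1, rule_format])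
  show "sp X X = bc_zero \<longleftrightarrow> X = M_zero" by (rule h[THEN conjunct2, THEN conjunct2, THEN conjunct2, rule_format])
qed

lemma Bf_add2:
  assumes "bicomplex_scalar_product sp"
  shows "Bf sp X (M_add Y Z) = Bf sp X Y + Bf sp X Z"
proof -
  have "sp X (M_add Y Z) = bc_add (sp X Y) (sp X Z)" by (rule bsp_D[OF assms])
  then show ?thesis by (simp add: Bf_def bc_add_def)
qed

lemma Bf_sym:
  assumes "bicomplex_scalar_product sp"
  shows "Bf sp X Y = Bf sp Y X"
proof -
  have "sp X Y = bc_conj3 (sp Y X)" by (rule bsp_D[OF assms])
  then show ?thesis by (simp add: Bf_def bc_conj3_def)
qed

lemma Bf_add1:
  assumes "bicomplex_scalar_product sp"
  shows "Bf sp (M_add Y Z) X = Bf sp Y X + Bf sp Z X"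
proof -
  have "Bf sp (M_add Y Z) X = Bf sp X (M_add Y Z)" by (rule Bf_sym[OF assms])
  also have "\<dots> = Bf sp X Y + Bf sp X Z" by (rule Bf_add2[OF assms])
  also have "\<dots> = Bf sp Y X + Bf sp Z X" using Bf_sym[OF assms, of X Y] Bf_sym[OF assms, of X Z] by simp
  finally show ?thesis .
qed

lemma Bf_smult2:
  assumes "bicomplex_scalar_product sp"
  shows "Bf sp X (M_smult (BC (of_real t) 0) Y) = t * Bf sp X Y"
proof -
  have "sp X (M_smult (BC (of_real t) 0) Y) = bc_mult (BC (of_real t) 0) (sp X Y)" by (rule bsp_D[OF assms])
  then show ?thesis by (simp add: Bf_def bc_mult_def)
qed

lemma Bf_smult1:
  assumes "bicomplex_scalar_product sp"
  shows "Bf sp (M_smult (BC (of_real t) 0) Y) X = t * Bf sp Y X"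
proof -
  have "Bf sp (M_smult (BC (of_real t) 0) Y) X = Bf sp X (M_smult (BC (of_real t) 0) Y)" by (rule Bf_sym[OF assms])
  also have "\<dots> = t * Bf sp X Y" by (rule Bf_smult2[OF assms])
  also have "\<dots> = t * Bf sp Y X" using Bf_sym[OF assms, of X Y] by simp
  finally show ?thesis .
qed

lemma Dplus_form:
  assumes "z \<in> bc_Dplus"
  shows "\<exists>a b. a \<ge> 0 \<and> b \<ge> 0 \<and> z = BC (complex_of_real ((a+b)/2)) (\<i> * complex_of_real ((a-b)/2))"
  using assms
  by (auto simp: bc_Dplus_def bc_add_def bc_mult_def bc_of_complex_def bc_e1_def bc_e2_def bc_j_def
      bc_i1_def bc_i2_def complex_eq_iff)

lemma Bf_nonneg:
  assumes "hyperbolic_positive sp"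
  shows "Bf sp X X \<ge> 0"
proof -
  have "sp X X \<in> bc_Dplus" using assms by (simp add: hyperbolic_positive_def)
  from Dplus_form[OF this] obtain a b where "a \<ge> 0" "b \<ge> 0"
    "sp X X = BC (complex_of_real ((a+b)/2)) (\<i> * complex_of_real ((a-b)/2))" by blast
  then show ?thesis by (simp add: Bf_def)
qed

lemma quad_nonneg_disc:
  fixes a b c :: real
  assumes "\<And>t. 0 \<le> a + 2 * t * b + t^2 * c" "c \<ge> 0"
  shows "b^2 \<le> a * c"
proof (cases "c = 0")
  case True
  have "b = 0"
  proof (rule ccontr)
    assume b: "b \<noteq> 0"
    have "a + 2 * (-(a+1)/(2*b)) * b + (-(a+1)/(2*b))^2 * c = -1" using b True by (simp add: field_simps)
    then show False using assms(1)[of "-(a+1)/(2*b)"] by linarith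
  qed
  then show ?thesis using True by simp
next
  case False
  then have c: "c > 0" using assms(2) by simp
  have "0 \<le> a + 2 * (-b/c) * b + (-b/c)^2 * c" using assms(1) .
  also have "\<dots> = a - b^2 / c" using c by (simp add: power2_eq_square field_simps)
  finally show ?thesis using c by (simp add: field_simps)
qed

lemma Bf_CS:
  assumes "bicomplex_scalar_product sp" "hyperbolic_positive sp"
  shows "(Bf sp X Y)^2 \<le> Bf sp X X * Bf sp Y Y"
proof (rule quad_nonneg_disc)
  fix t :: real
  let ?Z = "M_add X (M_smult (BC (of_real t) 0) Y)"
  have "0 \<le> Bf sp ?Z ?Z" by (rule Bf_nonneg[OF assms(2)])
  also have "Bf sp ?Z ?Z = Bf sp X X + 2 * t * Bf sp X Y + t^2 * Bf sp Y Y"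
  proof -
    let ?W = "M_smult (BC (of_real t) 0) Y"
    have "Bf sp ?Z ?Z = Bf sp X ?Z + Bf sp ?W ?Z"
      by (rule Bf_add1[OF assms(1)])
    also have "\<dots> = (Bf sp X X + Bf sp X ?W) + (Bf sp ?W X + Bf sp ?W ?W)"
      by (simp only: Bf_add2[OF assms(1)])
    also have "Bf sp X ?W = t * Bf sp X Y" by (rule Bf_smult2[OF assms(1)])
    also have "Bf sp ?W X = t * Bf sp Y X" by (rule Bf_smult1[OF assms(1)])
    also have "Bf sp ?W ?W = t * Bf sp Y ?W" by (rule Bf_smult1[OF assms(1)])
    also have "Bf sp Y ?W = t * Bf sp Y Y" by (rule Bf_smult2[OF assms(1)])
    also have "Bf sp Y X = Bf sp X Y" by (rule Bf_sym[OF assms(1)])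
    finally show ?thesis by (simp add: power2_eq_square algebra_simps)
  qed
  finally show "0 \<le> Bf sp X X + 2 * t * Bf sp X Y + t^2 * Bf sp Y Y" .
qed (rule Bf_nonneg[OF assms(2)])

lemma Vn_Bf: "V_norm sp X = sqrt (Bf sp X X)"
  by (simp add: V_norm_def Bf_def)

lemma Vn_triangle:
  assumes "bicomplex_scalar_product sp" "hyperbolic_positive sp"
  shows "V_norm sp (M_add X Y) \<le> V_norm sp X + V_norm sp Y"
proof -
  define a where "a = Bf sp X X"
  define c where "c = Bf sp Y Y"
  define b where "b = Bf sp X Y"
  have a0: "a \<ge> 0" and c0: "c \<ge> 0" unfolding a_def c_def by (auto intro: Bf_nonneg[OF assms(2)])
  have cs: "b^2 \<le> a * c" unfolding a_def b_def c_def by (rule Bf_CS[OF assms])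
  have "b \<le> sqrt a * sqrt c"
  proof -
    have "b \<le> sqrt (b^2)" by simp
    also have "\<dots> \<le> sqrt (a*c)" using cs by (rule real_sqrt_le_mono)
    finally show ?thesis by (simp add: real_sqrt_mult)
  qed
  have e: "Bf sp (M_add X Y) (M_add X Y) = a + 2 * b + c"
  proof -
    have "Bf sp (M_add X Y) (M_add X Y) = Bf sp X (M_add X Y) + Bf sp Y (M_add X Y)"
      by (rule Bf_add1[OF assms(1)])
    also have "\<dots> = (Bf sp X X + Bf sp X Y) + (Bf sp Y X + Bf sp Y Y)"
      by (simp only: Bf_add2[OF assms(1)])
    also have "Bf sp Y X = Bf sp X Y" by (rule Bf_sym[OF assms(1)])
    finally show ?thesis unfolding a_def b_def c_def by linarith
  qed
  have "a + 2 * b + c \<le> (sqrt a + sqrt c)^2"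
    using \<open>b \<le> sqrt a * sqrt c\<close> a0 c0 by (simp add: power2_eq_square algebra_simps)
  then have "sqrt (a + 2*b + c) \<le> sqrt a + sqrt c"
  proof -
    have "sqrt (a + 2*b + c) \<le> sqrt ((sqrt a + sqrt c)^2)"
      by (rule real_sqrt_le_mono) fact
    also have "\<dots> = sqrt a + sqrt c" using a0 c0 by simp
    finally show ?thesis .
  qed
  then show ?thesis using e by (simp add: Vn_Bf a_def c_def)
qed


lemma e1_sub: "M_e1 (M_sub X Y) = M_sub (M_e1 X) (M_e1 Y)"
  by (rule ext) (simp add: M_e1_def M_sub_def M_add_def M_smult_def bc_add_def bc_mult_def
      bc_of_complex_def bc_idem1_def bicomplex.expand algebra_simps)

lemma e2_sub: "M_e2 (M_sub X Y) = M_sub (M_e2 X) (M_e2 Y)"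
  by (rule ext) (simp add: M_e2_def M_sub_def M_add_def M_smult_def bc_add_def bc_mult_def
      bc_of_complex_def bc_idem2_def bicomplex.expand algebra_simps)

lemma sub_split: "M_sub X Z = M_add (M_sub X Y) (M_sub Y Z)"
  by (rule ext) (simp add: M_sub_def M_add_def M_smult_def bc_add_def bc_mult_def bicomplex.expand)

lemma sub_neg: "M_sub B A = M_smult (BC (of_real (-1)) 0) (M_sub A B)"
  by (rule ext) (simp add: M_sub_def M_add_def M_smult_def bc_add_def bc_mult_def bicomplex.expand)

lemma Vn_sub_sym:
  assumes "bicomplex_scalar_product sp"
  shows "V_norm sp (M_sub B A) = V_norm sp (M_sub A B)"
  unfolding Vn_Bf sub_neg[of B A]
  using Bf_smult1[OF assms, of "-1", simplified] Bf_smult2[OF assms, of _ "-1", simplified] by simp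

lemma e1_V: "M_e1 X \<in> V_space"
  by (simp add: M_e1_def V_space_def in_Ci1_def bc_of_complex_def)

lemma e2_V: "M_e2 X \<in> V_space"
  by (simp add: M_e2_def V_space_def in_Ci1_def bc_of_complex_def)

lemma sub_V: "X \<in> V_space \<Longrightarrow> Y \<in> V_space \<Longrightarrow> M_sub X Y \<in> V_space"
  by (simp add: V_space_def in_Ci1_def M_sub_def M_add_def M_smult_def bc_add_def bc_mult_def)

lemma Vn_zero:
  assumes "bicomplex_scalar_product sp" "hyperbolic_positive sp" "closed_on_V sp"
    and "Z \<in> V_space" "V_norm sp Z = 0"
  shows "Z = M_zero"
proof -
  have "sp Z Z \<in> bc_Dplus" using assms(2) by (simp add: hyperbolic_positive_def)
  from Dplus_form[OF this] obtain a b where ab: "a \<ge> 0" "b \<ge> 0"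
    "sp Z Z = BC (complex_of_real ((a+b)/2)) (\<i> * complex_of_real ((a-b)/2))" by blast
  have "in_Ci1 (sp Z Z)" using assms(3,4) by (simp add: closed_on_V_def)
  then have "a = b" using ab by (simp add: in_Ci1_def complex_eq_iff)
  moreover have "Re (bc1 (sp Z Z)) = 0" using assms(5) Bf_nonneg[OF assms(2), of Z]
    by (simp add: Vn_Bf Bf_def)
  ultimately have "sp Z Z = bc_zero" using ab by (simp add: bc_zero_def)
  moreover have "sp Z Z = bc_zero \<longleftrightarrow> Z = M_zero" by (rule bsp_D[OF assms(1)])
  ultimately show ?thesis by blast
qed

lemma e12_zero:
  assumes "M_e1 X = M_zero" "M_e2 X = M_zero"
  shows "X = M_zero"
proof (rule ext)
  fix l
  have "bc_idem1 (X l) = 0" "bc_idem2 (X l) = 0"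
    using fun_cong[OF assms(1), of l] fun_cong[OF assms(2), of l]
    by (auto simp: M_e1_def M_e2_def M_zero_def bc_zero_def bc_of_complex_def)
  then have "bc1 (X l) = \<i> * bc2 (X l)" "bc1 (X l) = - \<i> * bc2 (X l)"
    by (simp_all add: bc_idem1_def bc_idem2_def eq_neg_iff_add_eq_0)
  then have "bc2 (X l) = 0" "bc1 (X l) = 0" by auto
  then show "X l = M_zero l"
    by (simp add: M_zero_def bc_zero_def bicomplex.expand)
qed

lemma sub_zero:
  assumes "M_sub X Y = M_zero" shows "X = Y"
proof (rule ext)
  fix l
  have "M_sub X Y l = M_zero l" using assms by simp
  then show "X l = Y l"
    by (simp add: M_sub_def M_add_def M_smult_def bc_add_def bc_mult_def M_zero_def bc_zero_def bicomplex.expand)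
qed

lemma V_iff: "X \<in> V_space \<longleftrightarrow> M_e1 X = M_e2 X"
proof
  assume "X \<in> V_space" then show "M_e1 X = M_e2 X"
    by (auto simp: V_space_def in_Ci1_def M_e1_def M_e2_def bc_idem1_def bc_idem2_def)
next
  assume "M_e1 X = M_e2 X"
  then have "\<And>l. bc_idem1 (X l) = bc_idem2 (X l)"
    by (metis M_e1_def M_e2_def bc_of_complex_def bicomplex.inject)
  then show "X \<in> V_space"
    by (simp add: V_space_def in_Ci1_def bc_idem1_def bc_idem2_def)
qed

lemma Vn_nonneg: "hyperbolic_positive sp \<Longrightarrow> V_norm sp X \<ge> 0"
  using Bf_nonneg by (simp add: Vn_Bf)


lemma e1_add: "M_e1 (M_add X Y) = M_add (M_e1 X) (M_e1 Y)"
  by (rule ext) (simp add: M_e1_def M_add_def bc_add_def bc_of_complex_def bc_idem1_def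
      bicomplex.expand algebra_simps)

lemma e2_add: "M_e2 (M_add X Y) = M_add (M_e2 X) (M_e2 Y)"
  by (rule ext) (simp add: M_e2_def M_add_def bc_add_def bc_of_complex_def bc_idem2_def
      bicomplex.expand algebra_simps)

lemma Mn_triangle:
  assumes "bicomplex_scalar_product sp" "hyperbolic_positive sp"
  shows "M_norm sp (M_add A B) \<le> M_norm sp A + M_norm sp B"
proof -
  define a1 where "a1 = V_norm sp (M_e1 A)"
  define a2 where "a2 = V_norm sp (M_e2 A)"
  define b1 where "b1 = V_norm sp (M_e1 B)"
  define b2 where "b2 = V_norm sp (M_e2 B)"
  define c1 where "c1 = V_norm sp (M_e1 (M_add A B))"
  define c2 where "c2 = V_norm sp (M_e2 (M_add A B))"
  have c1: "c1 \<le> a1 + b1" unfolding c1_def a1_def b1_def e1_add by (rule Vn_triangle[OF assms])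
  have c2: "c2 \<le> a2 + b2" unfolding c2_def a2_def b2_def e2_add by (rule Vn_triangle[OF assms])
  have nn: "c1 \<ge> 0" "c2 \<ge> 0" unfolding c1_def c2_def by (auto intro: Vn_nonneg[OF assms(2)])
  have "c1^2 \<le> (a1+b1)^2" using c1 nn by (intro power_mono) auto
  moreover have "c2^2 \<le> (a2+b2)^2" using c2 nn by (intro power_mono) auto
  ultimately have "sqrt ((c1^2 + c2^2)/2) \<le> sqrt (((a1+b1)^2 + (a2+b2)^2)/2)"
    by (intro real_sqrt_le_mono) simp
  also have "\<dots> = sqrt ((a1+b1)^2 + (a2+b2)^2) / sqrt 2" by (simp add: real_sqrt_divide)
  also have "\<dots> \<le> (sqrt (a1^2 + a2^2) + sqrt (b1^2 + b2^2)) / sqrt 2"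
    by (intro divide_right_mono real_sqrt_sum_squares_triangle_ineq) simp
  also have "\<dots> = sqrt (a1^2 + a2^2) / sqrt 2 + sqrt (b1^2 + b2^2) / sqrt 2"
    by (rule add_divide_distrib)
  also have "\<dots> = sqrt ((a1^2 + a2^2)/2) + sqrt ((b1^2 + b2^2)/2)"
    by (simp only: real_sqrt_divide)
  finally show ?thesis unfolding M_norm_def a1_def a2_def b1_def b2_def c1_def c2_def .
qed

lemma Vn_M_zero:
  assumes "bicomplex_scalar_product sp"
  shows "V_norm sp M_zero = 0"
  using bsp_D(4)[OF assms, of M_zero] by (simp add: V_norm_def bc_zero_def)

lemma sub_self: "M_sub X X = M_zero"
  by (rule ext) (simp add: M_sub_def M_add_def M_smult_def bc_add_def bc_mult_def M_zero_def bc_zero_def bicomplex.expand)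

lemma e1_zero: "M_e1 M_zero = M_zero" and e2_zero: "M_e2 M_zero = M_zero"
  by (auto simp: M_e1_def M_e2_def M_zero_def bc_zero_def bc_of_complex_def bc_idem1_def bc_idem2_def)

lemma sum_le_2sqrt:
  fixes a b :: real
  shows "a + b \<le> 2 * sqrt ((a^2 + b^2)/2)"
proof -
  have "(a+b)^2 \<le> 4 * ((a^2 + b^2)/2)"
    using sum_squares_ge_zero[of "a-b" 0] by (simp add: power2_eq_square algebra_simps)
  then have "a + b \<le> sqrt (4 * ((a^2 + b^2)/2))" by (rule real_le_rsqrt)
  also have "\<dots> = sqrt 4 * sqrt ((a^2 + b^2)/2)" by (rule real_sqrt_mult)
  also have "sqrt 4 = (2::real)" by (rule real_sqrt_unique) simp_all
  finally show ?thesis .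
qed

theorem mainTheorem14:
  fixes sp :: "('n::finite \<Rightarrow> bicomplex) \<Rightarrow> ('n \<Rightarrow> bicomplex) \<Rightarrow> bicomplex"
  assumes "bicomplex_scalar_product sp"
    and "hyperbolic_positive sp"
    and "closed_on_V sp"
  shows "Metric_space UNIV (M_dist sp) \<and>
         closedin (Metric_space.mtopology UNIV (M_dist sp)) V_space"
proof -
  note A = assms(1,2)
  have ms: "Metric_space UNIV (M_dist sp)"
  proof
    fix x y z :: "'n bcmod"
    show "0 \<le> M_dist sp x y" by (simp add: M_dist_def M_norm_def)
    show "M_dist sp x y = M_dist sp y x"
      unfolding M_dist_def M_norm_def e1_sub e2_sub
      using Vn_sub_sym[OF assms(1), of "M_e1 x" "M_e1 y"] Vn_sub_sym[OF assms(1), of "M_e2 x" "M_e2 y"] by simp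
    show "M_dist sp x z \<le> M_dist sp x y + M_dist sp y z"
      unfolding M_dist_def sub_split[of x z y] by (rule Mn_triangle[OF A])
    show "(M_dist sp x y = 0) = (x = y)"
    proof
      assume "x = y" then show "M_dist sp x y = 0"
        by (simp add: M_dist_def M_norm_def sub_self e1_zero e2_zero Vn_M_zero[OF assms(1)])
    next
      assume h: "M_dist sp x y = 0"
      define a where "a = V_norm sp (M_e1 (M_sub x y))"
      define b where "b = V_norm sp (M_e2 (M_sub x y))"
      have "(a^2 + b^2)/2 = 0" using h
        by (simp add: M_dist_def M_norm_def a_def b_def del: divide_eq_0_iff)
      then have "a^2 + b^2 = 0" by simp
      then have "a = 0" "b = 0" by (simp_all add: sum_squares_eq_zero_iff)
      have z1: "V_norm sp (M_e1 (M_sub x y)) = 0" using \<open>a = 0\<close> by (simp only: a_def)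
      have z2: "V_norm sp (M_e2 (M_sub x y)) = 0" using \<open>b = 0\<close> by (simp only: b_def)
      have "M_e1 (M_sub x y) = M_zero" by (rule Vn_zero[OF assms e1_V z1])
      moreover have "M_e2 (M_sub x y) = M_zero" by (rule Vn_zero[OF assms e2_V z2])
      ultimately have "M_sub x y = M_zero" by (rule e12_zero)
      then show "x = y" by (rule sub_zero)
    qed
  qed
  interpret m: Metric_space UNIV "M_dist sp" by (rule ms)
  have "openin m.mtopology (UNIV - V_space)"
    unfolding m.openin_mtopology
  proof (intro conjI allI impI)
    fix X :: "'n bcmod" assume "X \<in> UNIV - V_space"
    then have XV: "X \<notin> V_space" by simp
    define D where "D = M_sub (M_e1 X) (M_e2 X)"
    have DV: "D \<in> V_space" unfolding D_def by (intro sub_V e1_V e2_V)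
    have "D \<noteq> M_zero"
    proof
      assume "D = M_zero"
      then have "M_e1 X = M_e2 X" unfolding D_def by (rule sub_zero)
      then show False using XV V_iff by blast
    qed
    then have "V_norm sp D \<noteq> 0" using Vn_zero[OF assms DV] by blast
    then have r: "V_norm sp D > 0" using Vn_nonneg[OF assms(2), of D] by linarith
    show "\<exists>r>0. m.mball X r \<subseteq> UNIV - V_space"
    proof (intro exI conjI)
      show "V_norm sp D / 2 > 0" using r by simp
      show "m.mball X (V_norm sp D / 2) \<subseteq> UNIV - V_space"
      proof
        fix Y :: "'n bcmod" assume "Y \<in> m.mball X (V_norm sp D / 2)"
        then have dY: "M_dist sp X Y < V_norm sp D / 2" by simp
        show "Y \<in> UNIV - V_space"
        proof (rule ccontr)
          assume "Y \<notin> UNIV - V_space"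
          then have "M_e1 Y = M_e2 Y" using V_iff by blast
          define a where "a = V_norm sp (M_e1 (M_sub X Y))"
          define b where "b = V_norm sp (M_e2 (M_sub X Y))"
          have Dsplit: "D = M_add (M_sub (M_e1 X) (M_e1 Y)) (M_sub (M_e1 Y) (M_e2 X))"
            unfolding D_def by (rule sub_split)
          have "V_norm sp D \<le> V_norm sp (M_sub (M_e1 X) (M_e1 Y)) + V_norm sp (M_sub (M_e2 Y) (M_e2 X))"
          proof -
            have "V_norm sp D \<le> V_norm sp (M_sub (M_e1 X) (M_e1 Y)) + V_norm sp (M_sub (M_e1 Y) (M_e2 X))"
              unfolding Dsplit by (rule Vn_triangle[OF A])
            then show ?thesis unfolding \<open>M_e1 Y = M_e2 Y\<close> by simp
          qed
          also have "\<dots> = a + b" unfolding a_def b_def e1_sub e2_sub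
            using Vn_sub_sym[OF assms(1), of "M_e2 X" "M_e2 Y"] by simp
          also have "\<dots> \<le> 2 * M_dist sp X Y" unfolding M_dist_def M_norm_def a_def b_def
            by (rule sum_le_2sqrt)
          finally show False using dY by simp
        qed
      qed
    qed
  qed simp
  then have "closedin m.mtopology V_space"
    unfolding closedin_def m.topspace_mtopology by simp
  with ms show ?thesis by simp
qed

end
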